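(* For any implicative frame $(X,\perp,Y,T)$, the algebra $(\mathcal{G}(X),\subseteq,\cap,\vee,\bot,X,\Rightarrow)$ of stable sets, where $\bot$ is the least stable set, $\vee$ the join in $\mathcal G(X)$ and $A\Rightarrow C={}'(A\blacktriangleright C')$, is an integral implicative lattice.
   Context: A sorted frame (polarity) is a triple $(X,\perp,Y)$ with $X,Y$ nonempty sets and ${\perp}\subseteq X\times Y$. For $U\subseteq X$ let $U'=\{y\in Y:\forall x\in U\ x\perp y\}$, and for $V\subseteq Y$ let ${}'V=\{x\in X:\forall y\in V\ x\perp y\}$. $A\subseteq X$ is stable if $A={}'(A')$; $B\subseteq Y$ is co-stable if $B=({}'B)'$. $\mathcal{G}(X)$, $\mathcal{G}(Y)$ are the complete lattices of stable, resp. co-stable, sets under inclusion (meets are intersections; joins are closures of unions, the closure of $W\subseteq X$ being ${}'(W')$ and of $W\subseteq Y$ being $W''=({}'W)'$). Preorders: for $x,z\in X$, $x\le z$ iff $\{x\}'\subseteq\{z\}'$; for $y,v\in Y$, $y\le v$ iff ${}'\{y\}\subseteq{}'\{v\}$; separated means both are partial orders. $\Gamma u$ is the set of elements above $u$. For $T\subseteq Y\times X\times Y$, its Galois dual $T'\subseteq X\times X\times Y$ is $uT'xv$ iff $\forall y\,(yTxv\Rightarrow u\perp y)$. An implicative frame is $(X,\perp,Y,T)$ with: (F0) $x\perp y$ iff $uT'xy$ for all $u\in X$; (F1) separated; (F2) each set $\{y: yTxv\}$ equals $\Gamma w$ for some $w\in Y$; (F3) if $yTxv$, $x_1\le x$,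 $v_1\le v$ then $yTx_1v_1$; (F4) for all $u,x\in X,v\in Y$, $\{x_1:uT'x_1v\}$ is stable and $\{v_1:uT'xv_1\}$ is co-stable. For $A\in\mathcal{G}(X)$, $B\in\mathcal{G}(Y)$: $A\blacktriangleright B=(\{y:\exists x\in A\,\exists v\in B\ yTxv\})''$. An integral implicative lattice is a bounded lattice with binary $\to$ satisfying (A1) $(a\vee b)\to c=(a\to c)\wedge(b\to c)$, (A2) $a\to(b\wedge c)=(a\to b)\wedge(a\to c)$, (A3) $a\le b$ iff $1\le a\to b$. *)

theory Defs
  imports Main
begin

text \<open>Sorted frame (polarity) (X, perp, Y); all operations are relative to the carriers X, Y.\<close>

definition rprime :: "'x set \<Rightarrow> 'y set \<Rightarrow> ('x \<Rightarrow> 'y \<Rightarrow> bool) \<Rightarrow> 'x set \<Rightarrow> 'y set" where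
  "rprime X Y R U = {y \<in> Y. \<forall>x\<in>U. R x y}"

definition lprime :: "'x set \<Rightarrow> 'y set \<Rightarrow> ('x \<Rightarrow> 'y \<Rightarrow> bool) \<Rightarrow> 'y set \<Rightarrow> 'x set" where
  "lprime X Y R V = {x \<in> X. \<forall>y\<in>V. R x y}"

definition stable :: "'x set \<Rightarrow> 'y set \<Rightarrow> ('x \<Rightarrow> 'y \<Rightarrow> bool) \<Rightarrow> 'x set \<Rightarrow> bool" where
  "stable X Y R A \<longleftrightarrow> A \<subseteq> X \<and> A = lprime X Y R (rprime X Y R A)"

definition costable :: "'x set \<Rightarrow> 'y set \<Rightarrow> ('x \<Rightarrow> 'y \<Rightarrow> bool) \<Rightarrow> 'y set \<Rightarrow> bool" where
  "costable X Y R B \<longleftrightarrow> B \<subseteq> Y \<and> B = rprime X Y R (lprime X Y R B)"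

definition leX :: "'x set \<Rightarrow> 'y set \<Rightarrow> ('x \<Rightarrow> 'y \<Rightarrow> bool) \<Rightarrow> 'x \<Rightarrow> 'x \<Rightarrow> bool" where
  "leX X Y R x z \<longleftrightarrow> rprime X Y R {x} \<subseteq> rprime X Y R {z}"

definition leY :: "'x set \<Rightarrow> 'y set \<Rightarrow> ('x \<Rightarrow> 'y \<Rightarrow> bool) \<Rightarrow> 'y \<Rightarrow> 'y \<Rightarrow> bool" where
  "leY X Y R y v \<longleftrightarrow> lprime X Y R {y} \<subseteq> lprime X Y R {v}"

definition separated :: "'x set \<Rightarrow> 'y set \<Rightarrow> ('x \<Rightarrow> 'y \<Rightarrow> bool) \<Rightarrow> bool" where
  "separated X Y R \<longleftrightarrow>
     (\<forall>x\<in>X. \<forall>z\<in>X. leX X Y R x z \<and> leX X Y R z x \<longrightarrow> x = z) \<and>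
     (\<forall>y\<in>Y. \<forall>v\<in>Y. leY X Y R y v \<and> leY X Y R v y \<longrightarrow> y = v)"

definition GammaY :: "'x set \<Rightarrow> 'y set \<Rightarrow> ('x \<Rightarrow> 'y \<Rightarrow> bool) \<Rightarrow> 'y \<Rightarrow> 'y set" where
  "GammaY X Y R w = {v \<in> Y. leY X Y R w v}"

text \<open>Galois dual T' of T (a subset of Y x X x Y), a relation on X x X x Y.\<close>
definition Tdual :: "'x set \<Rightarrow> 'y set \<Rightarrow> ('x \<Rightarrow> 'y \<Rightarrow> bool) \<Rightarrow> ('y \<Rightarrow> 'x \<Rightarrow> 'y \<Rightarrow> bool)
     \<Rightarrow> 'x \<Rightarrow> 'x \<Rightarrow> 'y \<Rightarrow> bool" where
  "Tdual X Y R T u x v \<longleftrightarrow> (\<forall>y\<in>Y. T y x v \<longrightarrow> R u y)"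

definition implicative_frame :: "'x set \<Rightarrow> ('x \<Rightarrow> 'y \<Rightarrow> bool) \<Rightarrow> 'y set \<Rightarrow> ('y \<Rightarrow> 'x \<Rightarrow> 'y \<Rightarrow> bool) \<Rightarrow> bool" where
  "implicative_frame X R Y T \<longleftrightarrow>
     X \<noteq> {} \<and> Y \<noteq> {} \<and>
     \<comment> \<open>F0\<close>
     (\<forall>x\<in>X. \<forall>y\<in>Y. R x y \<longleftrightarrow> (\<forall>u\<in>X. Tdual X Y R T u x y)) \<and>
     \<comment> \<open>F1\<close>
     separated X Y R \<and>
     \<comment> \<open>F2\<close>
     (\<forall>x\<in>X. \<forall>v\<in>Y. \<exists>w\<in>Y. {y \<in> Y. T y x v} = GammaY X Y R w) \<and>
     \<comment> \<open>F3\<close>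
     (\<forall>y\<in>Y. \<forall>x\<in>X. \<forall>v\<in>Y. \<forall>x1\<in>X. \<forall>v1\<in>Y.
        T y x v \<and> leX X Y R x1 x \<and> leY X Y R v1 v \<longrightarrow> T y x1 v1) \<and>
     \<comment> \<open>F4\<close>
     (\<forall>u\<in>X. \<forall>x\<in>X. \<forall>v\<in>Y.
        stable X Y R {x1 \<in> X. Tdual X Y R T u x1 v} \<and>
        costable X Y R {v1 \<in> Y. Tdual X Y R T u x v1})"

definition joinG :: "'x set \<Rightarrow> 'y set \<Rightarrow> ('x \<Rightarrow> 'y \<Rightarrow> bool) \<Rightarrow> 'x set \<Rightarrow> 'x set \<Rightarrow> 'x set" where
  "joinG X Y R A B = lprime X Y R (rprime X Y R (A \<union> B))"

definition botG :: "'x set \<Rightarrow> 'y set \<Rightarrow> ('x \<Rightarrow> 'y \<Rightarrow> bool) \<Rightarrow> 'x set" where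
  "botG X Y R = lprime X Y R (rprime X Y R {})"

definition tri :: "'x set \<Rightarrow> ('x \<Rightarrow> 'y \<Rightarrow> bool) \<Rightarrow> 'y set \<Rightarrow> ('y \<Rightarrow> 'x \<Rightarrow> 'y \<Rightarrow> bool)
     \<Rightarrow> 'x set \<Rightarrow> 'y set \<Rightarrow> 'y set" where
  "tri X R Y T A B = rprime X Y R (lprime X Y R {y \<in> Y. \<exists>x\<in>A. \<exists>v\<in>B. T y x v})"

definition impG :: "'x set \<Rightarrow> ('x \<Rightarrow> 'y \<Rightarrow> bool) \<Rightarrow> 'y set \<Rightarrow> ('y \<Rightarrow> 'x \<Rightarrow> 'y \<Rightarrow> bool)
     \<Rightarrow> 'x set \<Rightarrow> 'x set \<Rightarrow> 'x set" where
  "impG X R Y T A C = lprime X Y R (tri X R Y T A (rprime X Y R C))"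

definition bounded_lattice_on :: "'a set \<Rightarrow> ('a \<Rightarrow> 'a \<Rightarrow> bool) \<Rightarrow> ('a \<Rightarrow> 'a \<Rightarrow> 'a)
     \<Rightarrow> ('a \<Rightarrow> 'a \<Rightarrow> 'a) \<Rightarrow> 'a \<Rightarrow> 'a \<Rightarrow> bool" where
  "bounded_lattice_on S le meet join bt tp \<longleftrightarrow>
     (\<forall>a\<in>S. le a a) \<and>
     (\<forall>a\<in>S. \<forall>b\<in>S. le a b \<and> le b a \<longrightarrow> a = b) \<and>
     (\<forall>a\<in>S. \<forall>b\<in>S. \<forall>c\<in>S. le a b \<and> le b c \<longrightarrow> le a c) \<and>
     (\<forall>a\<in>S. \<forall>b\<in>S. meet a b \<in> S \<and> le (meet a b) a \<and> le (meet a b) b \<and>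
        (\<forall>c\<in>S. le c a \<and> le c b \<longrightarrow> le c (meet a b))) \<and>
     (\<forall>a\<in>S. \<forall>b\<in>S. join a b \<in> S \<and> le a (join a b) \<and> le b (join a b) \<and>
        (\<forall>c\<in>S. le a c \<and> le b c \<longrightarrow> le (join a b) c)) \<and>
     bt \<in> S \<and> tp \<in> S \<and> (\<forall>a\<in>S. le bt a \<and> le a tp)"

definition integral_implicative_lattice :: "'a set \<Rightarrow> ('a \<Rightarrow> 'a \<Rightarrow> bool) \<Rightarrow> ('a \<Rightarrow> 'a \<Rightarrow> 'a)
     \<Rightarrow> ('a \<Rightarrow> 'a \<Rightarrow> 'a) \<Rightarrow> 'a \<Rightarrow> 'a \<Rightarrow> ('a \<Rightarrow> 'a \<Rightarrow> 'a) \<Rightarrow> bool" where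
  "integral_implicative_lattice S le meet join bt tp imp \<longleftrightarrow>
     bounded_lattice_on S le meet join bt tp \<and>
     (\<forall>a\<in>S. \<forall>b\<in>S. imp a b \<in> S) \<and>
     \<comment> \<open>A1\<close>
     (\<forall>a\<in>S. \<forall>b\<in>S. \<forall>c\<in>S. imp (join a b) c = meet (imp a c) (imp b c)) \<and>
     \<comment> \<open>A2\<close>
     (\<forall>a\<in>S. \<forall>b\<in>S. \<forall>c\<in>S. imp a (meet b c) = meet (imp a b) (imp a c)) \<and>
     \<comment> \<open>A3\<close>
     (\<forall>a\<in>S. \<forall>b\<in>S. le a b \<longleftrightarrow> le tp (imp a b))"

end

theory Submission
  imports Defs
begin

lemma lp_st: "V \<subseteq> Y \<Longrightarrow> stable X Y R (lprime X Y R V)"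
  unfolding stable_def lprime_def rprime_def by blast

lemma st_eq: "stable X Y R A \<Longrightarrow> lprime X Y R (rprime X Y R A) = A"
  unfolding stable_def by (elim conjE, rule sym)
lemma cst_eq: "costable X Y R A \<Longrightarrow> rprime X Y R (lprime X Y R A) = A"
  unfolding costable_def by (elim conjE, rule sym)

lemma sX: "stable X Y R A \<Longrightarrow> A \<subseteq> X" unfolding stable_def by (elim conjE)

lemma lp_un: "lprime X Y R (U \<union> V) = lprime X Y R U \<inter> lprime X Y R V"
  unfolding lprime_def by blast

lemma rp_anti: "V \<subseteq> W \<Longrightarrow> rprime X Y R W \<subseteq> rprime X Y R V"
  unfolding rprime_def by blast
lemma lp_anti: "V \<subseteq> W \<Longrightarrow> lprime X Y R W \<subseteq> lprime X Y R V"
  unfolding lprime_def by blast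

lemma lp_sub: "lprime X Y R V \<subseteq> X" unfolding lprime_def by blast
lemma rp_sub: "rprime X Y R V \<subseteq> Y" unfolding rprime_def by blast

lemma imp_char:
  "impG X R Y T A C = {u\<in>X. \<forall>x\<in>A. \<forall>v\<in>rprime X Y R C. Tdual X Y R T u x v}"
proof -
  let ?S = "{y \<in> Y. \<exists>x\<in>A. \<exists>v\<in>rprime X Y R C. T y x v}"
  have "impG X R Y T A C = lprime X Y R (rprime X Y R (lprime X Y R ?S))"
    unfolding impG_def tri_def by simp
  also have "\<dots> = lprime X Y R ?S" using st_eq[OF lp_st[of ?S Y X R]] by blast
  also have "\<dots> = {u\<in>X. \<forall>x\<in>A. \<forall>v\<in>rprime X Y R C. Tdual X Y R T u x v}"
    unfolding lprime_def Tdual_def by blast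
  finally show ?thesis .
qed

lemma meet_st: "stable X Y R A \<Longrightarrow> stable X Y R B \<Longrightarrow> stable X Y R (A \<inter> B)"
proof -
  assume a: "stable X Y R A" "stable X Y R B"
  have e: "A \<inter> B = lprime X Y R (rprime X Y R A \<union> rprime X Y R B)"
    by (simp only: lp_un st_eq[OF a(1)] st_eq[OF a(2)])
  have s: "stable X Y R (lprime X Y R (rprime X Y R A \<union> rprime X Y R B))"
    by (rule lp_st) (use rp_sub[of X Y R] in blast)
  show ?thesis unfolding e by (rule s)
qed

theorem corollary3p7:
  fixes X :: "'x set" and Y :: "'y set"
    and R :: "'x \<Rightarrow> 'y \<Rightarrow> bool" and T :: "'y \<Rightarrow> 'x \<Rightarrow> 'y \<Rightarrow> bool"
  assumes "implicative_frame X R Y T"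
  shows "integral_implicative_lattice {A. stable X Y R A} (\<subseteq>) (\<inter>)
           (joinG X Y R) (botG X Y R) X (impG X R Y T)"
proof -
  have F0all: "\<forall>x\<in>X. \<forall>y\<in>Y. R x y \<longleftrightarrow> (\<forall>u\<in>X. Tdual X Y R T u x y)"
    using assms unfolding implicative_frame_def by (elim conjE)
  have F4: "\<forall>u\<in>X. \<forall>x\<in>X. \<forall>v\<in>Y.
        stable X Y R {x1 \<in> X. Tdual X Y R T u x1 v} \<and>
        costable X Y R {v1 \<in> Y. Tdual X Y R T u x v1}"
    using assms unfolding implicative_frame_def by (elim conjE)
  have F0: "\<And>x y. x\<in>X \<Longrightarrow> y\<in>Y \<Longrightarrow> R x y \<longleftrightarrow> (\<forall>u\<in>X. Tdual X Y R T u x y)"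
    by (rule F0all[rule_format])
  have F4a: "\<And>u x v. u\<in>X \<Longrightarrow> x\<in>X \<Longrightarrow> v\<in>Y \<Longrightarrow> stable X Y R {x1 \<in> X. Tdual X Y R T u x1 v}"
    by (rule F4[rule_format, THEN conjunct1])
  have F4b: "\<And>u x v. u\<in>X \<Longrightarrow> x\<in>X \<Longrightarrow> v\<in>Y \<Longrightarrow> costable X Y R {v1 \<in> Y. Tdual X Y R T u x v1}"
    by (rule F4[rule_format, THEN conjunct2])
  have joinst: "\<And>A B. stable X Y R (joinG X Y R A B)"
    unfolding joinG_def by (rule lp_st, rule rp_sub)
  have botst: "stable X Y R (botG X Y R)"
    unfolding botG_def by (rule lp_st, rule rp_sub)
  have topst: "stable X Y R X"
    unfolding stable_def lprime_def rprime_def by auto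
  have joinub: "\<And>A B. stable X Y R A \<Longrightarrow> stable X Y R B \<Longrightarrow> A \<subseteq> joinG X Y R A B \<and> B \<subseteq> joinG X Y R A B"
    using sX unfolding joinG_def lprime_def rprime_def by blast
  have joinlub: "\<And>A B C. stable X Y R A \<Longrightarrow> stable X Y R B \<Longrightarrow> stable X Y R C \<Longrightarrow> A \<subseteq> C \<Longrightarrow> B \<subseteq> C \<Longrightarrow> joinG X Y R A B \<subseteq> C"
  proof -
    fix A B C assume s: "stable X Y R A" "stable X Y R B" "stable X Y R C" "A \<subseteq> C" "B \<subseteq> C"
    have "rprime X Y R C \<subseteq> rprime X Y R (A \<union> B)" using s unfolding rprime_def by blast
    hence "lprime X Y R (rprime X Y R (A \<union> B)) \<subseteq> lprime X Y R (rprime X Y R C)"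
      unfolding lprime_def by blast
    thus "joinG X Y R A B \<subseteq> C" using st_eq[OF s(3)] unfolding joinG_def by simp
  qed
  have botle: "\<And>A. stable X Y R A \<Longrightarrow> botG X Y R \<subseteq> A"
  proof -
    fix A assume a: "stable X Y R A"
    have "rprime X Y R A \<subseteq> rprime X Y R {}" unfolding rprime_def by blast
    hence "lprime X Y R (rprime X Y R {}) \<subseteq> lprime X Y R (rprime X Y R A)" unfolding lprime_def by blast
    then show "botG X Y R \<subseteq> A" using st_eq[OF a] unfolding botG_def by simp
  qed
  have impst: "\<And>A C. stable X Y R (impG X R Y T A C)"
    unfolding impG_def tri_def by (rule lp_st, rule rp_sub)
  have A1: "impG X R Y T (joinG X Y R A B) C = impG X R Y T A C \<inter> impG X R Y T B C"
    if s: "stable X Y R A" "stable X Y R B" "stable X Y R C" for A B C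
  proof -
    have "\<forall>x\<in>joinG X Y R A B. Tdual X Y R T u x v"
      if u: "u \<in> X" and v: "v \<in> rprime X Y R C" and h: "\<forall>x\<in>A \<union> B. Tdual X Y R T u x v" for u v
    proof -
      have vY: "v \<in> Y" using v rp_sub[of X Y R] by blast
      have AX: "A \<union> B \<subseteq> X" using s sX by blast
      show ?thesis
      proof (cases "X = {}")
        case True then show ?thesis using sX[OF joinst[of A B]] by blast
      next
        case False
        then obtain x0 where x0: "x0 \<in> X" by blast
        let ?K = "{x1 \<in> X. Tdual X Y R T u x1 v}"
        have st: "stable X Y R ?K" using F4a[OF u x0 vY] .
        have "A \<union> B \<subseteq> ?K" using h AX by blast
        hence "rprime X Y R ?K \<subseteq> rprime X Y R (A \<union> B)" unfolding rprime_def by blast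
        hence "joinG X Y R A B \<subseteq> lprime X Y R (rprime X Y R ?K)"
          unfolding joinG_def lprime_def by blast
        also have "\<dots> = ?K" using st_eq[OF st] by simp
        finally show ?thesis by blast
      qed
    qed
    moreover have "A \<subseteq> joinG X Y R A B" "B \<subseteq> joinG X Y R A B" using joinub s by auto
    ultimately show ?thesis unfolding imp_char by blast
  qed
  have A2: "impG X R Y T A (B \<inter> C) = impG X R Y T A B \<inter> impG X R Y T A C"
    if s: "stable X Y R A" "stable X Y R B" "stable X Y R C" for A B C
  proof -
    have eq: "rprime X Y R (B \<inter> C) = rprime X Y R (lprime X Y R (rprime X Y R B \<union> rprime X Y R C))"
    proof -
      have "lprime X Y R (rprime X Y R B \<union> rprime X Y R C) = B \<inter> C"
        by (simp only: lp_un st_eq[OF s(2)] st_eq[OF s(3)])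
      thus ?thesis by simp
    qed
    have "\<forall>v\<in>rprime X Y R (B \<inter> C). Tdual X Y R T u x v"
      if u: "u \<in> X" and x: "x \<in> A" and h: "\<forall>v\<in>rprime X Y R B \<union> rprime X Y R C. Tdual X Y R T u x v" for u x
    proof -
      have xX: "x \<in> X" using x s sX by blast
      show ?thesis
      proof (cases "Y = {}")
        case True then show ?thesis using rp_sub[of X Y R] by blast
      next
        case False
        then obtain v0 where v0: "v0 \<in> Y" by blast
        let ?K = "{v1 \<in> Y. Tdual X Y R T u x v1}"
        have st: "costable X Y R ?K" using F4b[OF u xX v0] .
        have "rprime X Y R B \<union> rprime X Y R C \<subseteq> ?K" using h rp_sub[of X Y R] by blast
        hence "lprime X Y R ?K \<subseteq> lprime X Y R (rprime X Y R B \<union> rprime X Y R C)" unfolding lprime_def by blast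
        hence "rprime X Y R (B \<inter> C) \<subseteq> rprime X Y R (lprime X Y R ?K)"
          unfolding eq by (rule rp_anti)
        also have "\<dots> = ?K" using cst_eq[OF st] by simp
        finally show ?thesis by blast
      qed
    qed
    moreover have "rprime X Y R B \<subseteq> rprime X Y R (B \<inter> C)" "rprime X Y R C \<subseteq> rprime X Y R (B \<inter> C)"
      unfolding rprime_def by blast+
    ultimately show ?thesis unfolding imp_char by blast
  qed
  have A3: "A \<subseteq> C \<longleftrightarrow> X \<subseteq> impG X R Y T A C"
    if s: "stable X Y R A" "stable X Y R C" for A C
  proof
    assume "A \<subseteq> C"
    hence "\<forall>x\<in>A. \<forall>v\<in>rprime X Y R C. R x v" unfolding rprime_def by blast
    moreover have "A \<subseteq> X" using s sX by blast
    ultimately show "X \<subseteq> impG X R Y T A C" unfolding imp_char using F0 rp_sub[of X Y R] by blast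
  next
    assume h: "X \<subseteq> impG X R Y T A C"
    have AX: "A \<subseteq> X" using s sX by blast
    have "\<forall>x\<in>A. \<forall>v\<in>rprime X Y R C. R x v"
    proof (intro ballI)
      fix x v assume x: "x \<in> A" and v: "v \<in> rprime X Y R C"
      have "\<forall>u\<in>X. Tdual X Y R T u x v" using h x v unfolding imp_char by blast
      thus "R x v" using F0 x v AX rp_sub[of X Y R] by blast
    qed
    hence "A \<subseteq> lprime X Y R (rprime X Y R C)" using AX unfolding lprime_def by blast
    thus "A \<subseteq> C" using st_eq[OF s(2)] by simp
  qed
  have BL: "bounded_lattice_on {A. stable X Y R A} (\<subseteq>) (\<inter>) (joinG X Y R) (botG X Y R) X"
    unfolding bounded_lattice_on_def
  proof (intro conjI)
    show "\<forall>a\<in>Collect (stable X Y R). a \<subseteq> a" by blast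
    show "\<forall>a\<in>Collect (stable X Y R). \<forall>b\<in>Collect (stable X Y R). a \<subseteq> b \<and> b \<subseteq> a \<longrightarrow> a = b" by blast
    show "\<forall>a\<in>Collect (stable X Y R). \<forall>b\<in>Collect (stable X Y R). \<forall>c\<in>Collect (stable X Y R). a \<subseteq> b \<and> b \<subseteq> c \<longrightarrow> a \<subseteq> c" by blast
    show "\<forall>a\<in>Collect (stable X Y R). \<forall>b\<in>Collect (stable X Y R). a \<inter> b \<in> Collect (stable X Y R) \<and> a \<inter> b \<subseteq> a \<and> a \<inter> b \<subseteq> b \<and>
        (\<forall>c\<in>Collect (stable X Y R). c \<subseteq> a \<and> c \<subseteq> b \<longrightarrow> c \<subseteq> a \<inter> b)"
      using meet_st by blast
    show "\<forall>a\<in>Collect (stable X Y R). \<forall>b\<in>Collect (stable X Y R). joinG X Y R a b \<in> Collect (stable X Y R) \<and> a \<subseteq> joinG X Y R a b \<and> b \<subseteq> joinG X Y R a b \<and>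
        (\<forall>c\<in>Collect (stable X Y R). a \<subseteq> c \<and> b \<subseteq> c \<longrightarrow> joinG X Y R a b \<subseteq> c)"
    proof (intro ballI conjI impI)
      fix a b assume ab: "a \<in> Collect (stable X Y R)" "b \<in> Collect (stable X Y R)"
      show "joinG X Y R a b \<in> Collect (stable X Y R)" using joinst by simp
      show "a \<subseteq> joinG X Y R a b" using joinub ab by simp
      show "b \<subseteq> joinG X Y R a b" using joinub ab by simp
      fix c assume "c \<in> Collect (stable X Y R)" "a \<subseteq> c \<and> b \<subseteq> c"
      then show "joinG X Y R a b \<subseteq> c" using joinlub ab by simp
    qed
    show "botG X Y R \<in> Collect (stable X Y R)" using botst by simp
    show "X \<in> Collect (stable X Y R)" using topst by simp
    show "\<forall>a\<in>Collect (stable X Y R). botG X Y R \<subseteq> a \<and> a \<subseteq> X" using botle sX[of X Y R] by simp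
  qed
  show ?thesis
    unfolding integral_implicative_lattice_def mem_Collect_eq
  proof (intro conjI ballI)
    show "bounded_lattice_on {A. stable X Y R A} (\<subseteq>) (\<inter>) (joinG X Y R) (botG X Y R) X" by (rule BL)
  qed (simp_all only: mem_Collect_eq impst A1 A2 A3)
qed

end
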